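(* Let $\mathbb{F}$ be a field, $n,d\ge 1$, $X^1,\dots,X^d$ pairwise disjoint sets of variables $X^i=\{x^i_{jk}:j,k\in[n]\}$, $X=\bigcup_i X^i$, $A^i$ the $n\times n$ matrix with $(j,k)$ entry $x^i_{jk}$, and $f$ the $(1,1)$ entry of $A^1A^2\cdots A^d$. Then there exists a bijective partition $B:X\to Y\cup Z$ such that $\mathrm{maxrank}(M_{f^B})=n^{d-1}$.
   Context: $Y$ and $Z$ are disjoint sets of variables, and a bijective partition $B:X\to Y\cup Z$ is a bijection onto $Y\cup Z$; $f^B$ is $f$ with each $x$ replaced by $B(x)$. For $g\in\mathbb{F}[Y,Z]$, the polynomial coefficient matrix $M_g$ has rows indexed by monic multilinear monomials $p$ in $Y$ and columns by monic multilinear monomials $q$ in $Z$, with $M_g(p,q)=G$ iff $g=pq\,G+Q$ uniquely with $G$ containing only variables present in $p,q$ and $Q$ having no monomial divisible by $pq$ that contains only variables present in $p,q$. $\mathrm{maxrank}(M_g)=\max_{S:Y\cup Z\to\mathbb{F}}\mathrm{rank}(M_g|_S)$, where $M_g|_S$ evaluates entries at $S$. *)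

theory Defs
  imports Main "HOL.Vector_Spaces" "HOL-Library.Poly_Mapping" "HOL-Library.Function_Algebras"
begin

type_synonym ('v, 'a) mpoly = "('v \<Rightarrow>\<^sub>0 nat) \<Rightarrow>\<^sub>0 'a"

definition Var :: "'v \<Rightarrow> ('v, 'a::comm_ring_1) mpoly" where
  "Var v = Poly_Mapping.single (Poly_Mapping.single v 1) 1"

definition vars :: "('v, 'a::zero) mpoly \<Rightarrow> 'v set" where
  "vars p = (\<Union>m\<in>Poly_Mapping.keys p. Poly_Mapping.keys m)"

definition peval :: "('v \<Rightarrow> 'a) \<Rightarrow> ('v, 'a::comm_ring_1) mpoly \<Rightarrow> 'a" where
  "peval \<sigma> p = (\<Sum>m\<in>Poly_Mapping.keys p. Poly_Mapping.lookup p m * (\<Prod>v\<in>Poly_Mapping.keys m. \<sigma> v ^ Poly_Mapping.lookup m v))"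

definition rmon :: "('v \<Rightarrow> 'w) \<Rightarrow> ('v \<Rightarrow>\<^sub>0 nat) \<Rightarrow> ('w \<Rightarrow>\<^sub>0 nat)" where
  "rmon B m = (\<Sum>v\<in>Poly_Mapping.keys m. Poly_Mapping.single (B v) (Poly_Mapping.lookup m v))"

definition ren :: "('v \<Rightarrow> 'w) \<Rightarrow> ('v, 'a::comm_ring_1) mpoly \<Rightarrow> ('w, 'a) mpoly" where
  "ren B p = (\<Sum>m\<in>Poly_Mapping.keys p. Poly_Mapping.single (rmon B m) (Poly_Mapping.lookup p m))"

text \<open>The variable set X: x^i_{jk} is represented by (i,j,k), with i in [d], j,k in [n].\<close>
definition Xset :: "nat \<Rightarrow> nat \<Rightarrow> (nat \<times> nat \<times> nat) set" where
  "Xset n d = {(i,j,k). i \<in> {1..d} \<and> j \<in> {1..n} \<and> k \<in> {1..n}}"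

fun prod_entry :: "nat \<Rightarrow> nat \<Rightarrow> nat \<Rightarrow> nat \<Rightarrow> (nat \<times> nat \<times> nat, 'a::comm_ring_1) mpoly" where
  "prod_entry n 0 j k = (if j = k then 1 else 0)"
| "prod_entry n (Suc m) j k = (\<Sum>l\<in>{1..n}. prod_entry n m j l * Var (Suc m, l, k))"

definition fpoly :: "nat \<Rightarrow> nat \<Rightarrow> (nat \<times> nat \<times> nat, 'a::comm_ring_1) mpoly" where
  "fpoly n d = prod_entry n d 1 1"

definition mlmono :: "'v set \<Rightarrow> ('v, 'a::comm_ring_1) mpoly" where
  "mlmono U = (\<Prod>v\<in>U. Var v)"

text \<open>Entry M_g(p,q) for p = mlmono S (S a finite subset of Y), q = mlmono T (T a finite subset of Z):
  the unique G with g = pq G + Q, G only in variables of p,q, and Q having no monomial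
  divisible by pq that contains only variables of p,q.\<close>
definition coeff_entry :: "('v, 'a::comm_ring_1) mpoly \<Rightarrow> 'v set \<Rightarrow> 'v set \<Rightarrow> ('v, 'a) mpoly" where
  "coeff_entry g S T = (THE G. \<exists>Q. g = mlmono S * mlmono T * G + Q \<and> vars G \<subseteq> S \<union> T \<and>
      (\<forall>m\<in>Poly_Mapping.keys Q. \<not> (Poly_Mapping.keys m \<subseteq> S \<union> T \<and> (\<forall>v\<in>S \<union> T. 0 < Poly_Mapping.lookup m v))))"

text \<open>Rank of a matrix N with rows indexed by the finite subsets of Y and columns by the finite
  subsets of Z: dimension of its column space, in the vector space of functions
  (row index \<Rightarrow> field), columns extended by 0 outside the row index set.\<close>
definition mrank :: "'v set \<Rightarrow> 'v set \<Rightarrow> ('v set \<Rightarrow> 'v set \<Rightarrow> 'a::field) \<Rightarrow> nat" where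
  "mrank Y Z N = vector_space.dim (\<lambda>c u. \<lambda>x. c * u x)
     ((\<lambda>T. \<lambda>S. if finite S \<and> S \<subseteq> Y then N S T else 0) ` {T. finite T \<and> T \<subseteq> Z})"

definition maxrank :: "'v set \<Rightarrow> 'v set \<Rightarrow> ('v, 'a::field) mpoly \<Rightarrow> nat" where
  "maxrank Y Z g = Max {mrank Y Z (\<lambda>S T. peval \<sigma> (coeff_entry g S T)) | \<sigma>. True}"

end

theory Submission
  imports Defs "HOL-Library.FuncSet"
begin

lemma fun_sum_apply: "(\<Sum>a\<in>A. f a) x = (\<Sum>a\<in>A. f a x)"
  by (induction A rule: infinite_finite_induct) auto

definition ind :: "'v set \<Rightarrow> ('v \<Rightarrow>\<^sub>0 nat)" where
  "ind U = (\<Sum>v\<in>U. Poly_Mapping.single v 1)"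

lemma lookup_ind: "finite U \<Longrightarrow> Poly_Mapping.lookup (ind U) v = (if v \<in> U then 1 else 0)"
  unfolding ind_def lookup_sum lookup_single by (simp add: when_def)

lemma keys_ind: "finite U \<Longrightarrow> Poly_Mapping.keys (ind U) = U"
  by (simp add: set_eq_iff in_keys_iff lookup_ind)

lemma ind_inj: "finite U \<Longrightarrow> finite V \<Longrightarrow> ind U = ind V \<Longrightarrow> U = V"
  by (metis keys_ind)

lemma ind_insert: "finite F \<Longrightarrow> x \<notin> F \<Longrightarrow> ind (insert x F) = Poly_Mapping.single x 1 + ind F"
  unfolding ind_def by simp

lemma mlmono_ind: "finite U \<Longrightarrow> mlmono U = (Poly_Mapping.single (ind U) 1 :: ('v,'a::comm_ring_1) mpoly)"
proof (induction U rule: finite_induct)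
  case empty
  then show ?case by (simp add: mlmono_def ind_def)
next
  case (insert x F)
  then show ?case by (simp add: mlmono_def ind_insert Var_def mult_single)
qed

lemma ind_union: "finite S \<Longrightarrow> finite T \<Longrightarrow> S \<inter> T = {} \<Longrightarrow> ind (S \<union> T) = ind S + ind T"
  unfolding ind_def by (simp add: sum.union_disjoint)

lemma pm_sum_single: "(\<Sum>k\<in>Poly_Mapping.keys G. Poly_Mapping.single k (Poly_Mapping.lookup G k)) = G"
proof (rule poly_mapping_eqI)
  fix x
  show "Poly_Mapping.lookup (\<Sum>k\<in>Poly_Mapping.keys G. Poly_Mapping.single k (Poly_Mapping.lookup G k)) x = Poly_Mapping.lookup G x"
    unfolding lookup_sum lookup_single
    by (cases "x \<in> Poly_Mapping.keys G") (auto simp: when_def in_keys_iff)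
qed

lemma lookup_mult_single_shift:
  fixes G :: "('v, 'a::comm_ring_1) mpoly"
  shows "Poly_Mapping.lookup (Poly_Mapping.single a 1 * G) x =
     (\<Sum>k\<in>Poly_Mapping.keys G. (Poly_Mapping.lookup G k when a + k = x))"
proof -
  have "Poly_Mapping.single a 1 * G = (\<Sum>k\<in>Poly_Mapping.keys G. Poly_Mapping.single (a + k) (Poly_Mapping.lookup G k))"
    by (subst (1) pm_sum_single[of G, symmetric]) (simp add: sum_distrib_left mult_single)
  then show ?thesis by (simp add: lookup_sum lookup_single)
qed

lemma lookup_mult_single_at:
  fixes G :: "('v, 'a::comm_ring_1) mpoly"
  shows "Poly_Mapping.lookup (Poly_Mapping.single a 1 * G) (a + m) = Poly_Mapping.lookup G m"
proof -
  have "(\<Sum>k\<in>Poly_Mapping.keys G. (Poly_Mapping.lookup G k when a + k = a + m)) = 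
        (\<Sum>k\<in>Poly_Mapping.keys G. (if k = m then Poly_Mapping.lookup G k else 0))"
    by (rule sum.cong) (auto simp: when_def)
  also have "\<dots> = Poly_Mapping.lookup G m"
    by (cases "m \<in> Poly_Mapping.keys G") (auto simp: in_keys_iff)
  finally show ?thesis by (simp add: lookup_mult_single_shift)
qed

lemma peval_const: "peval \<sigma> (Poly_Mapping.single 0 c) = c"
  by (cases "c = 0") (auto simp: peval_def)

lemma ren_id: fixes p :: "('v, 'a::comm_ring_1) mpoly" shows "ren id p = p"
proof -
  have "rmon id m = m" for m :: "'v \<Rightarrow>\<^sub>0 nat"
    unfolding rmon_def using pm_sum_single[of m] by simp
  then have "ren id p = (\<Sum>m\<in>Poly_Mapping.keys p. Poly_Mapping.single m (Poly_Mapping.lookup p m))"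
    unfolding ren_def by simp
  also have "\<dots> = p" by (rule pm_sum_single)
  finally show ?thesis .
qed

lemma bad_iff: fixes m :: "'v \<Rightarrow>\<^sub>0 nat" shows "(Poly_Mapping.keys m \<subseteq> U \<and> (\<forall>v\<in>U. 0 < Poly_Mapping.lookup m v)) \<longleftrightarrow> Poly_Mapping.keys m = U"
  by (auto simp: in_keys_iff)

lemma coeff_entry_01:
  fixes g :: "('v, 'a::comm_ring_1) mpoly"
  assumes g01: "\<And>m v. m \<in> Poly_Mapping.keys g \<Longrightarrow> Poly_Mapping.lookup m v \<le> 1"
    and fin: "finite S" "finite T" and disj: "S \<inter> T = {}"
  shows "coeff_entry g S T = Poly_Mapping.single 0 (Poly_Mapping.lookup g (ind (S \<union> T)))"
proof -
  define U where "U = S \<union> T"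
  define a where "a = ind U"
  define c where "c = Poly_Mapping.lookup g a"
  have finU: "finite U" using fin U_def by auto
  have pq: "mlmono S * mlmono T = (Poly_Mapping.single a 1 :: ('v,'a) mpoly)"
    using fin disj by (simp add: mlmono_ind mult_single a_def U_def ind_union)
  have keysa: "Poly_Mapping.keys a = U" using finU a_def keys_ind by auto
  have eq01: "m = a" if "m \<in> Poly_Mapping.keys g" "Poly_Mapping.keys m = U" for m
  proof (rule poly_mapping_eqI)
    fix v
    show "Poly_Mapping.lookup m v = Poly_Mapping.lookup a v"
    proof -
      have la: "Poly_Mapping.lookup a v = (if v \<in> U then 1 else 0)" using lookup_ind finU a_def by metis
      show ?thesis
      proof (cases "v \<in> U")
        case True
        then have "Poly_Mapping.lookup m v \<noteq> 0" using that(2) by (auto simp: in_keys_iff)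
        then show ?thesis using g01[OF that(1), of v] la True by simp
      next
        case False
        then show ?thesis using that(2) la by (auto simp: in_keys_iff)
      qed
    qed
  qed
  let ?P = "\<lambda>G. \<exists>Q. g = mlmono S * mlmono T * G + Q \<and> vars G \<subseteq> S \<union> T \<and>
      (\<forall>m\<in>Poly_Mapping.keys Q. \<not> (Poly_Mapping.keys m \<subseteq> S \<union> T \<and> (\<forall>v\<in>S \<union> T. 0 < Poly_Mapping.lookup m v)))"
  have ex: "?P (Poly_Mapping.single 0 c)"
  proof (intro exI conjI)
    show "g = mlmono S * mlmono T * Poly_Mapping.single 0 c + (g - Poly_Mapping.single a c)"
      by (simp add: pq mult_single)
    show "vars (Poly_Mapping.single 0 c) \<subseteq> S \<union> T"
      unfolding vars_def keys_single by simp
    show "\<forall>m\<in>Poly_Mapping.keys (g - Poly_Mapping.single a c). \<not> (Poly_Mapping.keys m \<subseteq> S \<union> T \<and> (\<forall>v\<in>S \<union> T. 0 < Poly_Mapping.lookup m v))"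
    proof (intro ballI notI)
      fix m assume m: "m \<in> Poly_Mapping.keys (g - Poly_Mapping.single a c)"
        and b: "Poly_Mapping.keys m \<subseteq> S \<union> T \<and> (\<forall>v\<in>S \<union> T. 0 < Poly_Mapping.lookup m v)"
      have km: "Poly_Mapping.keys m = U" using b bad_iff[of m U] U_def by simp
      show False
      proof (cases "m = a")
        case True
        have "Poly_Mapping.lookup (g - Poly_Mapping.single a c) m = Poly_Mapping.lookup g m - Poly_Mapping.lookup (Poly_Mapping.single a c) m"
          by (rule lookup_minus)
        also have "\<dots> = 0" using True c_def by simp
        finally show ?thesis using m by (simp add: in_keys_iff)
      next
        case False
        have l1: "Poly_Mapping.lookup (g - Poly_Mapping.single a c) m = Poly_Mapping.lookup g m - Poly_Mapping.lookup (Poly_Mapping.single a c) m"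
          by (rule lookup_minus)
        have l2: "Poly_Mapping.lookup (Poly_Mapping.single a c) m = 0" using False by (simp add: lookup_single_not_eq)
        have "Poly_Mapping.lookup (g - Poly_Mapping.single a c) m = Poly_Mapping.lookup g m" using l1 l2 by simp
        then have "m \<in> Poly_Mapping.keys g" using m by (simp add: in_keys_iff)
        then show ?thesis using eq01 km False by blast
      qed
    qed
  qed
  have uniq: "G = Poly_Mapping.single 0 c" if "?P G" for G
  proof -
    from that obtain Q where Q0: "g = mlmono S * mlmono T * G + Q" "vars G \<subseteq> S \<union> T"
      "\<forall>m\<in>Poly_Mapping.keys Q. \<not> (Poly_Mapping.keys m \<subseteq> S \<union> T \<and> (\<forall>v\<in>S \<union> T. 0 < Poly_Mapping.lookup m v))"
      by blast
    have Q: "g = Poly_Mapping.single a 1 * G + Q" "vars G \<subseteq> U"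
      "\<forall>m\<in>Poly_Mapping.keys Q. Poly_Mapping.keys m \<noteq> U"
      using Q0(1) pq apply simp
      using Q0(2) U_def apply simp
      using Q0(3) bad_iff[of _ "S \<union> T"] unfolding U_def by simp
    show ?thesis
    proof (rule poly_mapping_eqI)
      fix m
      show "Poly_Mapping.lookup G m = Poly_Mapping.lookup (Poly_Mapping.single 0 c) m"
      proof (cases "Poly_Mapping.keys m \<subseteq> U")
        case False
        then have "m \<notin> Poly_Mapping.keys G" using Q(2) by (auto simp: vars_def)
        moreover have "m \<noteq> 0" using False by auto
        ultimately show ?thesis by (simp add: in_keys_iff lookup_single when_def)
      next
        case True
        have kam: "Poly_Mapping.keys (a + m) = U"
        proof -
          have "Poly_Mapping.keys (a + m) = Poly_Mapping.keys a \<union> Poly_Mapping.keys m"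
            by (auto simp: in_keys_iff lookup_add)
          then show ?thesis using True keysa by auto
        qed
        then have "Poly_Mapping.lookup Q (a + m) = 0" using Q(3) by (auto simp: in_keys_iff)
        then have gG: "Poly_Mapping.lookup g (a + m) = Poly_Mapping.lookup G m"
          using Q(1) by (simp add: lookup_add lookup_mult_single_at)
        show ?thesis
        proof (cases "m = 0")
          case True
          then show ?thesis using gG c_def by simp
        next
          case False
          then obtain v where v: "v \<in> Poly_Mapping.keys m" by (metis keys_eq_empty ex_in_conv)
          then have "v \<in> U" using True by auto
          then have "Poly_Mapping.lookup (a + m) v \<ge> 2" using v finU
            by (auto simp: a_def lookup_add lookup_ind in_keys_iff)
          then have "a + m \<notin> Poly_Mapping.keys g"
          proof -
            assume h: "2 \<le> Poly_Mapping.lookup (a + m) v"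
            show ?thesis
            proof
              assume "a + m \<in> Poly_Mapping.keys g"
              then have "Poly_Mapping.lookup (a + m) v \<le> 1" by (rule g01)
              with h show False by simp
            qed
          qed
          then show ?thesis using gG False by (simp add: in_keys_iff lookup_single when_def)
        qed
      qed
    qed
  qed
  have "coeff_entry g S T = Poly_Mapping.single 0 c"
    unfolding coeff_entry_def using ex uniq by (rule the_equality)
  then show ?thesis by (simp add: c_def a_def U_def)
qed

definition Paths :: "nat \<Rightarrow> nat \<Rightarrow> nat \<Rightarrow> nat \<Rightarrow> (nat \<Rightarrow> nat) set" where
  "Paths n m j k = {l. l 0 = j \<and> l m = k \<and> (\<forall>i. 0 < i \<and> i < m \<longrightarrow> l i \<in> {1..n}) \<and> (\<forall>i>m. l i = 0)}"

definition Kp :: "nat \<Rightarrow> (nat \<Rightarrow> nat) \<Rightarrow> (nat \<times> nat \<times> nat) set" where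
  "Kp m l = (\<lambda>i. (i, l (i - 1), l i)) ` {1..m}"

lemma finite_Kp: "finite (Kp m l)" by (simp add: Kp_def)

lemma Paths_0: "Paths n 0 j k = (if j = k then {\<lambda>i. if i = 0 then j else 0} else {})"
  by (auto simp: Paths_def fun_eq_iff)

lemma Paths_Suc:
  assumes j: "j \<in> {1..n}"
  shows "Paths n (Suc m) j k = (\<lambda>(l', l). l(Suc m := k)) ` (SIGMA l':{1..n}. Paths n m j l')"
proof (rule set_eqI, rule iffI)
  fix p assume p: "p \<in> Paths n (Suc m) j k"
  have pm: "p m \<in> {1..n}"
    using p j by (cases m) (auto simp: Paths_def)
  have "p(Suc m := 0) \<in> Paths n m j (p m)"
    using p by (auto simp: Paths_def)
  moreover have "p = (p(Suc m := 0))(Suc m := k)" using p by (auto simp: Paths_def)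
  ultimately show "p \<in> (\<lambda>(l', l). l(Suc m := k)) ` (SIGMA l':{1..n}. Paths n m j l')"
    using pm by (auto intro!: image_eqI[where x="(p m, p(Suc m := 0))"])
next
  fix p assume "p \<in> (\<lambda>(l', l). l(Suc m := k)) ` (SIGMA l':{1..n}. Paths n m j l')"
  then obtain l' l where l: "l' \<in> {1..n}" "l \<in> Paths n m j l'" and p: "p = l(Suc m := k)" by auto
  show "p \<in> Paths n (Suc m) j k"
    unfolding p using l
    by (auto simp: Paths_def less_Suc_eq)
qed

lemma inj_Paths_Suc:
  "inj_on (\<lambda>(l', l). l(Suc m := k)) (SIGMA l':{1..n}. Paths n m j l')"
proof (rule inj_onI, clarify)
  fix a l b l2
  assume h: "a \<in> {1..n}" "l \<in> Paths n m j a" "b \<in> {1..n}" "l2 \<in> Paths n m j b"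
    "l(Suc m := k) = l2(Suc m := k)"
  have "l = l2"
  proof
    fix i show "l i = l2 i"
    proof (cases "i = Suc m")
      case True then show ?thesis using h by (auto simp: Paths_def)
    next
      case False
      have "(l(Suc m := k)) i = (l2(Suc m := k)) i" using h(5) by simp
      with False show ?thesis by simp
    qed
  qed
  then show "a = b \<and> l = l2" using h by (auto simp: Paths_def)
qed

lemma finite_Paths: "j \<in> {1..n} \<Longrightarrow> finite (Paths n m j k)"
proof (induction m arbitrary: k)
  case 0 then show ?case by (simp add: Paths_0)
next
  case (Suc m) then show ?case by (simp add: Paths_Suc)
qed

lemma Kp_Suc: 
  assumes "l \<in> Paths n m j l'"
  shows "Kp (Suc m) (l(Suc m := k)) = insert (Suc m, l', k) (Kp m l)"
proof -
  have "Kp (Suc m) (l(Suc m := k)) = insert (Suc m, l m, k) ((\<lambda>i. (i, (l(Suc m := k)) (i - 1), (l(Suc m := k)) i)) ` {1..m})"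
    unfolding Kp_def by (simp add: atLeastAtMostSuc_conv)
  also have "(\<lambda>i. (i, (l(Suc m := k)) (i - 1), (l(Suc m := k)) i)) ` {1..m} = Kp m l"
    unfolding Kp_def by (rule image_cong) auto
  moreover have lm: "l m = l'" using assms by (simp add: Paths_def)
  ultimately show ?thesis by simp
qed

lemma notin_Kp: "(Suc m, a, b) \<notin> Kp m l" by (auto simp: Kp_def)

lemma prod_entry_Paths:
  assumes j: "j \<in> {1..n}"
  shows "(prod_entry n m j k :: (nat \<times> nat \<times> nat, 'a::comm_ring_1) mpoly)
     = (\<Sum>l\<in>Paths n m j k. Poly_Mapping.single (ind (Kp m l)) 1)"
proof (induction m arbitrary: k)
  case 0
  then show ?case by (simp add: Paths_0 Kp_def ind_def)
next
  case (Suc m)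
  have "(\<Sum>p\<in>Paths n (Suc m) j k. Poly_Mapping.single (ind (Kp (Suc m) p)) (1::'a))
     = (\<Sum>x\<in>(SIGMA l':{1..n}. Paths n m j l'). Poly_Mapping.single (ind (Kp (Suc m) ((\<lambda>(l', l). l(Suc m := k)) x))) 1)"
    unfolding Paths_Suc[OF j] by (rule sum.reindex[OF inj_Paths_Suc, unfolded comp_def])
  also have "\<dots> = (\<Sum>l'\<in>{1..n}. \<Sum>l\<in>Paths n m j l'. Poly_Mapping.single (ind (Kp (Suc m) (l(Suc m := k)))) 1)"
    apply (subst sum.Sigma)
      apply simp
     apply (simp add: finite_Paths[OF j])
    apply (rule sum.cong)
     apply auto
    done
  also have "\<dots> = (\<Sum>l'\<in>{1..n}. \<Sum>l\<in>Paths n m j l'. Poly_Mapping.single (ind (Kp m l)) 1 * Var (Suc m, l', k))"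
  proof (intro sum.cong refl)
    fix l' l assume "l \<in> Paths n m j l'"
    then show "Poly_Mapping.single (ind (Kp (Suc m) (l(Suc m := k)))) (1::'a) = Poly_Mapping.single (ind (Kp m l)) 1 * Var (Suc m, l', k)"
      by (simp add: Kp_Suc ind_insert finite_Kp notin_Kp Var_def mult_single add.commute)
  qed
  also have "\<dots> = prod_entry n (Suc m) j k"
    by (simp add: Suc sum_distrib_right)
  finally show ?case by simp
qed

lemma path_range:
  assumes "p \<in> Paths n d 1 1" "1 \<le> n" "i \<le> d"
  shows "p i \<in> {1..n}"
  using assms by (cases "i = 0 \<or> i = d") (auto simp: Paths_def)

lemma Kp_Xset:
  assumes "p \<in> Paths n d 1 1" "1 \<le> n"
  shows "Kp d p \<subseteq> Xset n d"
  using path_range[OF assms] by (auto simp: Kp_def Xset_def)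

lemma inj_gen:
  assumes p: "p \<in> Paths n d 1 1" and q: "q \<in> Paths n d 1 1"
    and eq: "Kp d p \<inter> W = Kp d q \<inter> W"
    and W: "\<And>x. x \<in> Kp d p \<union> Kp d q \<Longrightarrow> x \<in> W \<longleftrightarrow> Q (fst x)"
    and cov: "\<And>t. 0 < t \<Longrightarrow> t < d \<Longrightarrow> Q t \<or> Q (Suc t)"
  shows "p = q"
proof
  fix t
  show "p t = q t"
  proof (cases "t = 0 \<or> t \<ge> d")
    case True
    then show ?thesis using p q by (cases "t = d") (auto simp: Paths_def)
  next
    case False
    then have t: "0 < t" "t < d" by auto
    show ?thesis
    proof (cases "Q t")
      case True
      have x: "(t, p (t-1), p t) \<in> Kp d p" using t by (auto simp: Kp_def)
      then have "(t, p (t-1), p t) \<in> W" using W True by auto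
      with x eq have "(t, p (t-1), p t) \<in> Kp d q" by blast
      then show ?thesis by (auto simp: Kp_def)
    next
      case False
      then have Qs: "Q (Suc t)" using cov t by blast
      have x: "(Suc t, p t, p (Suc t)) \<in> Kp d p" using t unfolding Kp_def
        by (auto intro!: image_eqI[where x="Suc t"])
      then have "(Suc t, p t, p (Suc t)) \<in> W" using W Qs by auto
      with x eq have "(Suc t, p t, p (Suc t)) \<in> Kp d q" by blast
      then show ?thesis by (auto simp: Kp_def)
    qed
  qed
qed

definition Yset :: "nat \<Rightarrow> nat \<Rightarrow> (nat \<times> nat \<times> nat) set" where
  "Yset n d = {x \<in> Xset n d. odd (fst x)}"
definition Zset :: "nat \<Rightarrow> nat \<Rightarrow> (nat \<times> nat \<times> nat) set" where
  "Zset n d = {x \<in> Xset n d. even (fst x)}"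

lemma injY:
  assumes "p \<in> Paths n d 1 1" "q \<in> Paths n d 1 1" "1 \<le> n"
    "Kp d p \<inter> Yset n d = Kp d q \<inter> Yset n d"
  shows "p = q"
proof (rule inj_gen[OF assms(1,2,4), where Q=odd])
  fix x assume "x \<in> Kp d p \<union> Kp d q"
  then show "x \<in> Yset n d \<longleftrightarrow> odd (fst x)"
    using Kp_Xset[OF assms(1,3)] Kp_Xset[OF assms(2,3)] by (auto simp: Yset_def)
qed auto

lemma injZ:
  assumes "p \<in> Paths n d 1 1" "q \<in> Paths n d 1 1" "1 \<le> n"
    "Kp d p \<inter> Zset n d = Kp d q \<inter> Zset n d"
  shows "p = q"
proof (rule inj_gen[OF assms(1,2,4), where Q=even])
  fix x assume "x \<in> Kp d p \<union> Kp d q"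
  then show "x \<in> Zset n d \<longleftrightarrow> even (fst x)"
    using Kp_Xset[OF assms(1,3)] Kp_Xset[OF assms(2,3)] by (auto simp: Zset_def)
qed auto

lemma card_Paths:
  assumes "1 \<le> d"
  shows "card (Paths n d 1 1) = n ^ (d - 1)"
proof -
  have bij: "bij_betw (\<lambda>p. restrict p {1..<d}) (Paths n d 1 1) (PiE {1..<d} (\<lambda>_. {1..n}))"
  proof (rule bij_betw_imageI)
    show "inj_on (\<lambda>p. restrict p {1..<d}) (Paths n d 1 1)"
    proof (rule inj_onI)
      fix p q assume h: "p \<in> Paths n d 1 1" "q \<in> Paths n d 1 1" "restrict p {1..<d} = restrict q {1..<d}"
      show "p = q"
      proof
        fix i show "p i = q i"
        proof (cases "i \<in> {1..<d}")
          case True then show ?thesis using h(3) by (metis restrict_apply')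
        next
          case False then show ?thesis using h(1,2) by (cases "i = d \<or> i = 0") (auto simp: Paths_def)
        qed
      qed
    qed
    show "(\<lambda>p. restrict p {1..<d}) ` Paths n d 1 1 = PiE {1..<d} (\<lambda>_. {1..n})"
    proof (rule set_eqI, rule iffI)
      fix f assume "f \<in> (\<lambda>p. restrict p {1..<d}) ` Paths n d 1 1"
      then show "f \<in> PiE {1..<d} (\<lambda>_. {1..n})" by (auto simp: Paths_def)
    next
      fix f assume f: "f \<in> PiE {1..<d} (\<lambda>_. {1..n})"
      define p where "p = (\<lambda>i. if i = 0 \<or> i = d then 1 else if i < d then f i else 0)"
      have "p \<in> Paths n d 1 1" using f assms by (auto simp: Paths_def p_def)
      moreover have "restrict p {1..<d} = f"
      proof
        fix i show "restrict p {1..<d} i = f i"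
          using f by (cases "i \<in> {1..<d}") (auto simp: p_def PiE_def extensional_def)
      qed
      ultimately show "f \<in> (\<lambda>p. restrict p {1..<d}) ` Paths n d 1 1" by blast
    qed
  qed
  have "card (Paths n d 1 1) = card (PiE {1..<d} (\<lambda>_. {1..n}))"
    using bij by (rule bij_betw_same_card)
  also have "\<dots> = n ^ (d - 1)" by (simp add: card_PiE)
  finally show ?thesis .
qed

lemma fpoly_Paths: "1 \<le> n \<Longrightarrow> (fpoly n d :: (nat \<times> nat \<times> nat, 'a::comm_ring_1) mpoly)
   = (\<Sum>l\<in>Paths n d 1 1. Poly_Mapping.single (ind (Kp d l)) 1)"
  unfolding fpoly_def by (rule prod_entry_Paths) auto

lemma fpoly_01:
  assumes "1 \<le> n" "m \<in> Poly_Mapping.keys (fpoly n d :: (nat \<times> nat \<times> nat, 'a::comm_ring_1) mpoly)"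
  shows "Poly_Mapping.lookup m v \<le> 1"
proof -
  have "m \<in> (\<Union>l\<in>Paths n d 1 1. Poly_Mapping.keys (Poly_Mapping.single (ind (Kp d l)) (1::'a)))"
    using assms(2) keys_sum[of "\<lambda>l. Poly_Mapping.single (ind (Kp d l)) (1::'a)" "Paths n d 1 1"] 
    unfolding fpoly_Paths[OF assms(1)] by blast
  then obtain l where "m = ind (Kp d l)" by (auto simp: keys_single split: if_splits)
  then show ?thesis by (simp add: lookup_ind finite_Kp)
qed

lemma lookup_fpoly:
  assumes "1 \<le> n" "finite U"
  shows "Poly_Mapping.lookup (fpoly n d :: (nat \<times> nat \<times> nat, 'a::comm_ring_1) mpoly) (ind U)
     = (if \<exists>p\<in>Paths n d 1 1. Kp d p = U then 1 else 0)"
proof -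
  have "Poly_Mapping.lookup (fpoly n d :: (nat \<times> nat \<times> nat, 'a) mpoly) (ind U)
     = (\<Sum>l\<in>Paths n d 1 1. if Kp d l = U then 1 else 0)"
    unfolding fpoly_Paths[OF assms(1)] lookup_sum lookup_single
  proof (rule sum.cong[OF refl])
    fix l
    have "ind (Kp d l) = ind U \<longleftrightarrow> Kp d l = U" using ind_inj[OF finite_Kp assms(2)] by blast
    then show "((1::'a) when ind (Kp d l) = ind U) = (if Kp d l = U then 1 else 0)"
      by (simp add: when_def)
  qed
  also have "\<dots> = (if \<exists>p\<in>Paths n d 1 1. Kp d p = U then 1 else 0)"
  proof (cases "\<exists>p\<in>Paths n d 1 1. Kp d p = U")
    case True
    then obtain p0 where p0: "p0 \<in> Paths n d 1 1" "Kp d p0 = U" by blast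
    have "(\<Sum>l\<in>Paths n d 1 1. if Kp d l = U then (1::'a) else 0) = (\<Sum>l\<in>Paths n d 1 1. if l = p0 then 1 else 0)"
    proof (rule sum.cong[OF refl])
      fix l assume l: "l \<in> Paths n d 1 1"
      have "Kp d l = U \<longleftrightarrow> l = p0"
      proof
        assume "Kp d l = U"
        then have "Kp d l \<inter> Yset n d = Kp d p0 \<inter> Yset n d" using p0(2) by simp
        then show "l = p0" by (rule injY[OF l p0(1) assms(1)])
      next
        assume "l = p0" then show "Kp d l = U" using p0(2) by simp
      qed
      then show "(if Kp d l = U then (1::'a) else 0) = (if l = p0 then 1 else 0)" by simp
    qed
    also have "\<dots> = 1" using p0(1) finite_Paths[of 1 n d 1] assms(1) by simp
    finally show ?thesis using True by simp
  next
    case False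
    then have "\<forall>l\<in>Paths n d 1 1. (if Kp d l = U then (1::'a) else 0) = 0" by auto
    then show ?thesis using False by (simp only: sum.neutral) simp
  qed
  finally show ?thesis .
qed

interpretation fvs: vector_space "(\<lambda>c u. \<lambda>x. c * u x) :: 'a::field \<Rightarrow> ('b \<Rightarrow> 'a) \<Rightarrow> ('b \<Rightarrow> 'a)"
  by unfold_locales (auto simp: fun_eq_iff algebra_simps)

definition ee :: "'v set \<Rightarrow> 'v set \<Rightarrow> 'a::field" where
  "ee R = (\<lambda>S. if S = R then 1 else 0)"

lemma ee_inj: "ee R1 = (ee R2 :: 'v set \<Rightarrow> 'a::field) \<Longrightarrow> R1 = R2"
  unfolding ee_def by (metis one_neq_zero)

lemma indep_ee:
  assumes "finite A"
  shows "\<not> fvs.dependent ((ee :: 'v set \<Rightarrow> 'v set \<Rightarrow> 'a::field) ` A)"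
proof
  let ?D = "(ee :: 'v set \<Rightarrow> 'v set \<Rightarrow> 'a) ` A"
  assume "fvs.dependent ?D"
  then obtain u v where uv: "v \<in> ?D" "u v \<noteq> 0" "(\<Sum>w\<in>?D. (\<lambda>x. u w * w x)) = 0"
    using fvs.dependent_finite[of ?D] assms by auto
  obtain R0 where R0: "R0 \<in> A" "v = ee R0" using uv(1) by auto
  have w: "w R0 = (if w = v then 1 else 0)" if wD: "w \<in> ?D" for w
  proof -
    obtain R' where R': "w = ee R'" using wD by auto
    show ?thesis
    proof (cases "w = v")
      case True then show ?thesis using R0 by (simp add: ee_def)
    next
      case False then have "R' \<noteq> R0" using R' R0 by auto
      then show ?thesis using R' False by (simp add: ee_def)
    qed
  qed
  have "0 = (\<Sum>w\<in>?D. (\<lambda>x. u w * w x)) R0" using uv(3) by simp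
  also have "\<dots> = (\<Sum>w\<in>?D. u w * w R0)" by (rule fun_sum_apply)
  also have "\<dots> = (\<Sum>w\<in>?D. if w = v then u w else 0)"
    by (rule sum.cong) (auto simp: w)
  also have "\<dots> = u v" using uv(1) assms by simp
  finally show False using uv(2) by simp
qed

lemma mrank_main:
  fixes n d :: nat and \<sigma> :: "nat \<times> nat \<times> nat \<Rightarrow> 'a::field"
  assumes n: "n \<ge> 1" and d: "d \<ge> 1"
  shows "mrank (Yset n d) (Zset n d) (\<lambda>S T. peval \<sigma> (coeff_entry (fpoly n d :: (nat \<times> nat \<times> nat, 'a) mpoly) S T)) = n ^ (d - 1)"
proof -
  let ?Y = "Yset n d" and ?Z = "Zset n d" and ?P = "Paths n d 1 1"
  let ?g = "fpoly n d :: (nat \<times> nat \<times> nat, 'a) mpoly"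
  define N where "N = (\<lambda>S T. peval \<sigma> (coeff_entry ?g S T))"
  have YZ: "?Y \<inter> ?Z = {}" by (auto simp: Yset_def Zset_def)
  have XYZ: "Xset n d = ?Y \<union> ?Z" by (auto simp: Yset_def Zset_def)
  have NST: "N S T = (if \<exists>p\<in>?P. Kp d p = S \<union> T then 1 else 0)"
    if S: "finite S" "S \<subseteq> ?Y" and T: "finite T" "T \<subseteq> ?Z" for S T
  proof -
    have ST: "S \<inter> T = {}" using S(2) T(2) YZ by blast
    have "coeff_entry ?g S T = Poly_Mapping.single 0 (Poly_Mapping.lookup ?g (ind (S \<union> T)))"
      by (rule coeff_entry_01[OF fpoly_01[OF n] S(1) T(1) ST])
    moreover have "Poly_Mapping.lookup ?g (ind (S \<union> T)) = (if \<exists>p\<in>?P. Kp d p = S \<union> T then 1 else 0)"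
      by (rule lookup_fpoly[OF n]) (use S T in auto)
    ultimately show ?thesis unfolding N_def by (simp add: peval_const)
  qed
  define col where "col = (\<lambda>T. \<lambda>S. if finite S \<and> S \<subseteq> ?Y then N S T else (0::'a))"
  define D where "D = (\<lambda>p. ee (Kp d p \<inter> ?Y) :: (nat \<times> nat \<times> nat) set \<Rightarrow> 'a) ` ?P"
  define C where "C = col ` {T. finite T \<and> T \<subseteq> ?Z}"
  have KX: "Kp d p \<subseteq> ?Y \<union> ?Z" if "p \<in> ?P" for p using Kp_Xset[OF that n] XYZ by simp
  have colp: "col (Kp d p \<inter> ?Z) = ee (Kp d p \<inter> ?Y)" if p: "p \<in> ?P" for p
  proof
    fix S
    show "col (Kp d p \<inter> ?Z) S = ee (Kp d p \<inter> ?Y) S"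
    proof (cases "finite S \<and> S \<subseteq> ?Y")
      case False
      then have "S \<noteq> Kp d p \<inter> ?Y" using finite_Kp[of d p] by auto
      then show ?thesis using False unfolding col_def ee_def by auto
    next
      case True
      have NS: "N S (Kp d p \<inter> ?Z) = (if \<exists>q\<in>?P. Kp d q = S \<union> (Kp d p \<inter> ?Z) then 1 else 0)"
        using True by (intro NST) (auto simp: finite_Kp)
      have "(\<exists>q\<in>?P. Kp d q = S \<union> (Kp d p \<inter> ?Z)) \<longleftrightarrow> S = Kp d p \<inter> ?Y"
      proof
        assume "\<exists>q\<in>?P. Kp d q = S \<union> (Kp d p \<inter> ?Z)"
        then obtain q where q: "q \<in> ?P" "Kp d q = S \<union> (Kp d p \<inter> ?Z)" by blast
        have "Kp d q \<inter> ?Z = Kp d p \<inter> ?Z" using q(2) True YZ by auto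
        then have "q = p" by (rule injZ[OF q(1) p n])
        then show "S = Kp d p \<inter> ?Y" using q(2) True YZ by auto
      next
        assume "S = Kp d p \<inter> ?Y"
        then have "Kp d p = S \<union> (Kp d p \<inter> ?Z)" using KX[OF p] by auto
        then show "\<exists>q\<in>?P. Kp d q = S \<union> (Kp d p \<inter> ?Z)" using p by blast
      qed
      then show ?thesis using True NS by (simp add: col_def ee_def)
    qed
  qed
  have col0: "col T = 0" if T: "finite T" "T \<subseteq> ?Z" and np: "\<forall>p\<in>?P. T \<noteq> Kp d p \<inter> ?Z" for T
  proof
    fix S
    show "col T S = 0 S"
    proof (cases "finite S \<and> S \<subseteq> ?Y")
      case False then show ?thesis unfolding col_def by auto
    next
      case True
      have "\<not> (\<exists>q\<in>?P. Kp d q = S \<union> T)"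
      proof
        assume "\<exists>q\<in>?P. Kp d q = S \<union> T"
        then obtain q where q: "q \<in> ?P" "Kp d q = S \<union> T" by blast
        then have "T = Kp d q \<inter> ?Z" using True T YZ by auto
        then show False using np q(1) by blast
      qed
      then show ?thesis using NST[of S T] True T by (simp add: col_def)
    qed
  qed
  have DC: "D \<subseteq> C"
  proof
    fix x assume "x \<in> D"
    then obtain p where p: "p \<in> ?P" "x = ee (Kp d p \<inter> ?Y)" by (auto simp: D_def)
    then have "x = col (Kp d p \<inter> ?Z)" using colp by simp
    moreover have "Kp d p \<inter> ?Z \<in> {T. finite T \<and> T \<subseteq> ?Z}" by (auto simp: finite_Kp)
    ultimately show "x \<in> C" unfolding C_def by blast
  qed
  have CD: "C \<subseteq> insert 0 D"
  proof
    fix x assume "x \<in> C"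
    then obtain T where T: "finite T" "T \<subseteq> ?Z" "x = col T" by (auto simp: C_def)
    show "x \<in> insert 0 D"
    proof (cases "\<exists>p\<in>?P. T = Kp d p \<inter> ?Z")
      case True
      then obtain p where "p \<in> ?P" "T = Kp d p \<inter> ?Z" by blast
      then show ?thesis using T colp by (auto simp: D_def)
    next
      case False then show ?thesis using col0[OF T(1,2)] T(3) by auto
    qed
  qed
  have spanCD: "fvs.span C = fvs.span D"
  proof
    show "fvs.span C \<subseteq> fvs.span D"
      using fvs.span_mono[OF CD] fvs.span_insert_0 by simp
    show "fvs.span D \<subseteq> fvs.span C" using fvs.span_mono[OF DC] .
  qed
  have finP: "finite ?P" using finite_Paths[of 1 n d 1] n by simp
  have "D = ee ` ((\<lambda>p. Kp d p \<inter> ?Y) ` ?P)" unfolding D_def by auto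
  then have indD: "fvs.independent D" using indep_ee[of "(\<lambda>p. Kp d p \<inter> ?Y) ` ?P"] finP by simp
  have injD: "inj_on (\<lambda>p. ee (Kp d p \<inter> ?Y) :: (nat \<times> nat \<times> nat) set \<Rightarrow> 'a) ?P"
  proof (rule inj_onI)
    fix p q assume h: "p \<in> ?P" "q \<in> ?P" "(ee (Kp d p \<inter> ?Y) :: (nat \<times> nat \<times> nat) set \<Rightarrow> 'a) = ee (Kp d q \<inter> ?Y)"
    from h(3) have "Kp d p \<inter> ?Y = Kp d q \<inter> ?Y" by (rule ee_inj)
    then show "p = q" by (rule injY[OF h(1,2) n])
  qed
  have "mrank ?Y ?Z N = fvs.dim C" unfolding mrank_def C_def col_def by simp
  also have "\<dots> = fvs.dim (fvs.span C)" by simp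
  also have "\<dots> = fvs.dim D" using spanCD by simp
  also have "\<dots> = card D" using indD by (rule fvs.dim_eq_card_independent)
  also have "\<dots> = card ?P" unfolding D_def using injD by (rule card_image)
  also have "\<dots> = n ^ (d - 1)" using d by (rule card_Paths)
  finally show ?thesis unfolding N_def .
qed

theorem lemma2:
  fixes n d :: nat
  assumes "n \<ge> 1" and "d \<ge> 1"
  shows "\<exists>(B :: nat \<times> nat \<times> nat \<Rightarrow> nat \<times> nat \<times> nat) Y Z.
           Y \<inter> Z = {} \<and> bij_betw B (Xset n d) (Y \<union> Z) \<and>
           maxrank Y Z (ren B (fpoly n d :: (nat \<times> nat \<times> nat, 'a::field) mpoly)) = n ^ (d - 1)"
proof (intro exI conjI)
  show "Yset n d \<inter> Zset n d = {}" by (auto simp: Yset_def Zset_def)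
  have XYZ: "Xset n d = Yset n d \<union> Zset n d" by (auto simp: Yset_def Zset_def)
  show "bij_betw id (Xset n d) (Yset n d \<union> Zset n d)" unfolding XYZ by simp
  have "{mrank (Yset n d) (Zset n d) (\<lambda>S T. peval \<sigma> (coeff_entry (fpoly n d :: (nat \<times> nat \<times> nat, 'a) mpoly) S T)) | \<sigma>. True}
        = {n ^ (d - 1)}"
    using mrank_main[OF assms] by auto
  then show "maxrank (Yset n d) (Zset n d) (ren id (fpoly n d :: (nat \<times> nat \<times> nat, 'a::field) mpoly)) = n ^ (d - 1)"
    unfolding maxrank_def ren_id by simp
qed

end
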